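(* $$\sum_{n=1}^\infty \frac{2^n H_n \binom{2n}{n}}{n\, 3^{2n}} = \frac{\pi^2}{6} - (\log 2)^2.$$
   Context: $H_n=\sum_{k=1}^n \frac{1}{k}$ denotes the $n$-th harmonic number and $\binom{2n}{n}$ the central binomial coefficient; $\log$ is the natural logarithm. *)

theory Defs
  imports "HOL-Analysis.Analysis"
begin

end

theory Submission
  imports Defs "HOL-Real_Asymp.Real_Asymp"
begin

lemma cb_rec: "real (Suc n) * real (2 * Suc n choose Suc n) = (4 * real n + 2) * real (2 * n choose n)"
proof -
  have e1: "Suc n * (Suc (Suc (2*n)) choose Suc n) = Suc (Suc (2*n)) * (Suc (2*n) choose n)"
    using Suc_times_binomial[of n "Suc (2*n)"] by simp
  have e2: "Suc n * (Suc (2*n) choose Suc n) = Suc (2*n) * (2*n choose n)"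
    using Suc_times_binomial[of n "2*n"] by simp
  have e3: "(Suc (2*n) choose Suc n) = (Suc (2*n) choose n)"
    using binomial_symmetric[of "Suc n" "Suc (2*n)"] by simp
  have r1: "real (Suc n) * real (Suc (Suc (2*n)) choose Suc n) = real (Suc n) * (2 * real (Suc (2*n) choose n))"
    using arg_cong[OF e1, of real] by (simp only: of_nat_mult) (simp add: algebra_simps)
  hence r1': "real (Suc (Suc (2*n)) choose Suc n) = 2 * real (Suc (2*n) choose n)"
    by (simp only: mult_left_cancel of_nat_eq_0_iff nat.distinct(1) simp_thms)
  have r2: "real (Suc n) * real (Suc (2*n) choose n) = real (Suc (2*n)) * real (2*n choose n)"
    using arg_cong[OF e2, of real] e3 by (simp only: of_nat_mult e3)
  have "2 * Suc n = Suc (Suc (2*n))" by simp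
  hence "real (Suc n) * real (2 * Suc n choose Suc n) = 2 * (real (Suc n) * real (Suc (2*n) choose n))"
    using r1' by simp
  also have "\<dots> = (4 * real n + 2) * real (2 * n choose n)" using r2 by simp
  finally show ?thesis .
qed

lemma cb_le: "real (2 * n choose n) \<le> 4 ^ n"
proof -
  have "(2*n choose n) \<le> 2^(2*n)" by (rule binomial_le_pow2)
  hence "real (2*n choose n) \<le> 2^(2*n)" by (metis of_nat_le_iff of_nat_numeral of_nat_power)
  thus ?thesis by (simp add: power_mult)
qed

lemma summable_n_geom: 
  fixes r :: real assumes "\<bar>r\<bar> < 1" shows "summable (\<lambda>n. real n * r ^ n)"
proof -
  have "summable (\<lambda>n. diffs (\<lambda>_. 1::real) n * r ^ n)"
    by (rule termdiff_converges[where K="(1 + \<bar>r\<bar>)/2"]) (use assms in \<open>auto intro!: summable_geometric\<close>)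
  hence "summable (\<lambda>n. real (Suc n) * r ^ n)" by (simp add: diffs_def)
  hence "summable (\<lambda>n. real (Suc n) * r ^ n * r)" by (rule summable_mult2)
  hence "summable (\<lambda>n. real (Suc n) * r ^ (Suc n))" by (simp add: algebra_simps)
  thus ?thesis by (subst summable_Suc_iff[symmetric])
qed

lemma harm_le_n: "harm n \<le> (real n)"
proof (induction n)
  case 0 thus ?case by (simp add: harm_def)
next
  case (Suc n)
  have "inverse (real (Suc n)) \<le> 1" by (simp add: inverse_le_1_iff)
  thus ?case using Suc by (simp add: harm_Suc)
qed

definition cc :: "nat \<Rightarrow> real" where "cc n = real (2 * n choose n)"
definition bb :: "nat \<Rightarrow> real" where "bb n = cc n * harm n"
definition aa :: "nat \<Rightarrow> real" where "aa n = bb n / real n"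
definition li :: "nat \<Rightarrow> real" where "li n = 1 / (real n)^2"

lemma cc_pos: "cc n > 0" by (simp add: cc_def)

lemma summ_cc: assumes "\<bar>x\<bar> < 1/4" shows "summable (\<lambda>n. cc n * x^n)"
proof (rule summable_comparison_test')
  show "summable (\<lambda>n. (4*\<bar>x\<bar>)^n)" using assms by (intro summable_geometric) simp
  fix n :: nat
  have "norm (cc n * x^n) = cc n * \<bar>x\<bar>^n" using cc_pos[of n] by (simp add: abs_mult power_abs)
  also have "\<dots> \<le> 4^n * \<bar>x\<bar>^n" using cb_le[of n] by (intro mult_right_mono) (auto simp: cc_def)
  finally show "norm (cc n * x^n) \<le> (4*\<bar>x\<bar>)^n" by (simp add: power_mult_distrib)
qed

lemma summ_bb: assumes "\<bar>x\<bar> < 1/4" shows "summable (\<lambda>n. bb n * x^n)"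
proof (rule summable_comparison_test')
  show "summable (\<lambda>n. real n * (4*\<bar>x\<bar>)^n)" using assms by (intro summable_n_geom) simp
  fix n :: nat
  have "norm (bb n * x^n) = cc n * harm n * \<bar>x\<bar>^n" using cc_pos[of n] harm_nonneg[of n]
    by (simp add: bb_def abs_mult power_abs)
  also have "\<dots> \<le> 4^n * real n * \<bar>x\<bar>^n" using cb_le[of n] harm_le_n[of n] harm_nonneg[of n]
    by (intro mult_right_mono mult_mono) (auto simp: cc_def)
  finally show "norm (bb n * x^n) \<le> real n * (4*\<bar>x\<bar>)^n" by (simp add: power_mult_distrib mult_ac)
qed

lemma aa_le: "aa n \<le> cc n" "aa n \<ge> 0"
proof -
  show "aa n \<ge> 0" unfolding aa_def bb_def using cc_pos[of n] harm_nonneg[of n] by (intro divide_nonneg_nonneg mult_nonneg_nonneg) auto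
  show "aa n \<le> cc n"
  proof (cases "n = 0")
    case True thus ?thesis using cc_pos[of n] by (simp add: aa_def)
  next
    case False
    have "harm n / real n \<le> 1" using harm_le_n[of n] False by simp
    hence "cc n * (harm n / real n) \<le> cc n * 1" using cc_pos[of n] by (intro mult_left_mono) auto
    thus ?thesis by (simp add: aa_def bb_def)
  qed
qed

lemma summ_aa: assumes "\<bar>x\<bar> < 1/4" shows "summable (\<lambda>n. aa n * x^n)"
proof (rule summable_comparison_test')
  show "summable (\<lambda>n. (4*\<bar>x\<bar>)^n)" using assms by (intro summable_geometric) simp
  fix n :: nat
  have "norm (aa n * x^n) = aa n * \<bar>x\<bar>^n" using aa_le(2)[of n] by (simp add: abs_mult power_abs)
  also have "\<dots> \<le> 4^n * \<bar>x\<bar>^n"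
  proof -
    have "aa n \<le> 4^n" using aa_le(1)[of n] cb_le[of n] unfolding cc_def by linarith
    thus ?thesis by (intro mult_right_mono) auto
  qed
  finally show "norm (aa n * x^n) \<le> (4*\<bar>x\<bar>)^n" by (simp add: power_mult_distrib)
qed

lemma summ_li: assumes "\<bar>x\<bar> \<le> 1" shows "summable (\<lambda>n. li n * x^n)"
proof (rule summable_comparison_test')
  have "summable (\<lambda>n. 1 / (real (Suc n))^2)" using inverse_squares_sums
    by (simp add: sums_iff add.commute)
  thus "summable li" unfolding li_def by (subst summable_Suc_iff[symmetric]) simp
  fix n :: nat
  have "\<bar>x\<bar>^n \<le> 1" using assms by (simp add: power_le_one)
  thus "norm (li n * x^n) \<le> li n" unfolding li_def
    by (simp add: abs_mult power_abs divide_inverse mult_left_le)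
qed

lemma deriv_ps:
  fixes c :: "nat \<Rightarrow> real"
  assumes "\<And>z. \<bar>z\<bar> < K \<Longrightarrow> summable (\<lambda>n. c n * z^n)" "\<bar>x\<bar> < K"
  shows "((\<lambda>x. \<Sum>n. c n * x^n) has_real_derivative (\<Sum>n. diffs c n * x^n)) (at x)"
    "(\<lambda>n. diffs c n * x^n) sums (\<Sum>n. diffs c n * x^n)"
proof -
  show "((\<lambda>x. \<Sum>n. c n * x^n) has_real_derivative (\<Sum>n. diffs c n * x^n)) (at x)"
    by (rule termdiffs_strong'[of K]) (use assms in auto)
  have "summable (\<lambda>n. diffs c n * x^n)"
    by (rule termdiff_converges[of x K]) (use assms in auto)
  thus "(\<lambda>n. diffs c n * x^n) sums (\<Sum>n. diffs c n * x^n)" by (simp add: summable_sums)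
qed

lemma shift_n:
  fixes c :: "nat \<Rightarrow> real"
  assumes "(\<lambda>n. diffs c n * x^n) sums S" shows "(\<lambda>n. real n * c n * x^n) sums (x * S)"
proof -
  have "(\<lambda>n. diffs c n * x^n * x) sums (S * x)" by (rule sums_mult2[OF assms])
  hence "(\<lambda>n. real (Suc n) * c (Suc n) * x^(Suc n)) sums (S * x)" by (simp add: diffs_def mult_ac)
  hence "(\<lambda>n. real n * c n * x^n) sums (S * x + real 0 * c 0 * x^0)" by (subst sums_Suc_iff[symmetric])
  thus ?thesis by (simp add: mult.commute)
qed

lemma shift_1:
  fixes c :: "nat \<Rightarrow> real"
  assumes "(\<lambda>n. c (Suc n) * x^n) sums T" shows "(\<lambda>n. c n * x^n) sums (x * T + c 0)"
proof -
  have "(\<lambda>n. c (Suc n) * x^n * x) sums (T * x)" by (rule sums_mult2[OF assms])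
  hence "(\<lambda>n. c (Suc n) * x^(Suc n)) sums (T * x)" by (simp add: mult_ac)
  hence "(\<lambda>n. c n * x^n) sums (T * x + c 0 * x^0)" by (subst sums_Suc_iff[symmetric])
  thus ?thesis by (simp add: mult.commute)
qed

definition Cf :: "real \<Rightarrow> real" where "Cf x = (\<Sum>n. cc n * x^n)"
definition Cd :: "real \<Rightarrow> real" where "Cd x = (\<Sum>n. diffs cc n * x^n)"
definition Gf :: "real \<Rightarrow> real" where "Gf x = (\<Sum>n. bb n * x^n)"
definition Gd :: "real \<Rightarrow> real" where "Gd x = (\<Sum>n. diffs bb n * x^n)"
definition Ff :: "real \<Rightarrow> real" where "Ff x = (\<Sum>n. aa n * x^n)"
definition Fd :: "real \<Rightarrow> real" where "Fd x = (\<Sum>n. diffs aa n * x^n)"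
definition Li2 :: "real \<Rightarrow> real" where "Li2 x = (\<Sum>n. li n * x^n)"
definition Ld :: "real \<Rightarrow> real" where "Ld x = (\<Sum>n. diffs li n * x^n)"

lemma diffs_cc: "diffs cc n = (4 * real n + 2) * cc n"
  using cb_rec[of n] by (simp add: diffs_def cc_def)

lemma C_ode: assumes "\<bar>x\<bar> < 1/4" shows "(1 - 4*x) * Cd x = 2 * Cf x"
proof -
  have s1: "(\<lambda>n. diffs cc n * x^n) sums Cd x" unfolding Cd_def by (rule deriv_ps(2)[OF summ_cc assms])
  have s2: "(\<lambda>n. real n * cc n * x^n) sums (x * Cd x)" by (rule shift_n[OF s1])
  have s3: "(\<lambda>n. cc n * x^n) sums Cf x" unfolding Cf_def using summ_cc[OF assms] by (simp add: summable_sums)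
  have "(\<lambda>n. diffs cc n * x^n - 4 * (real n * cc n * x^n) - 2 * (cc n * x^n)) sums (Cd x - 4 * (x * Cd x) - 2 * Cf x)"
    by (intro sums_diff sums_mult s1 s2 s3)
  moreover have "(\<lambda>n. diffs cc n * x^n - 4 * (real n * cc n * x^n) - 2 * (cc n * x^n)) = (\<lambda>n. 0)"
    by (rule ext) (simp add: diffs_cc algebra_simps)
  ultimately have "Cd x - 4 * (x * Cd x) - 2 * Cf x = 0" by (simp add: sums_iff)
  thus ?thesis by (simp add: algebra_simps)
qed

lemma diffs_bb: "diffs bb n = (4 * real n + 2) * bb n + cc (Suc n)"
proof -
  have "diffs bb n = real (Suc n) * cc (Suc n) * (harm n + inverse (real (Suc n)))"
    by (simp add: diffs_def bb_def harm_Suc)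
  also have "\<dots> = real (Suc n) * cc (Suc n) * harm n + cc (Suc n)"
    by (simp add: field_simps del: of_nat_Suc)
  also have "\<dots> = (4 * real n + 2) * bb n + cc (Suc n)"
    using cb_rec[of n] by (simp add: bb_def cc_def del: of_nat_Suc)
  finally show ?thesis .
qed

lemma G_ode: assumes "\<bar>x\<bar> < 1/4" shows "x * ((1 - 4*x) * Gd x - 2 * Gf x) = Cf x - 1"
proof -
  have s1: "(\<lambda>n. diffs bb n * x^n) sums Gd x" unfolding Gd_def by (rule deriv_ps(2)[OF summ_bb assms])
  have s2: "(\<lambda>n. real n * bb n * x^n) sums (x * Gd x)" by (rule shift_n[OF s1])
  have s3: "(\<lambda>n. bb n * x^n) sums Gf x" unfolding Gf_def using summ_bb[OF assms] by (simp add: summable_sums)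
  have "(\<lambda>n. diffs bb n * x^n - 4 * (real n * bb n * x^n) - 2 * (bb n * x^n)) sums (Gd x - 4 * (x * Gd x) - 2 * Gf x)"
    by (intro sums_diff sums_mult s1 s2 s3)
  moreover have "(\<lambda>n. diffs bb n * x^n - 4 * (real n * bb n * x^n) - 2 * (bb n * x^n)) = (\<lambda>n. cc (Suc n) * x^n)"
    by (rule ext) (simp add: diffs_bb algebra_simps)
  ultimately have "(\<lambda>n. cc (Suc n) * x^n) sums (Gd x - 4 * (x * Gd x) - 2 * Gf x)" by simp
  hence "(\<lambda>n. cc n * x^n) sums (x * (Gd x - 4 * (x * Gd x) - 2 * Gf x) + cc 0)" by (rule shift_1)
  moreover have s4: "(\<lambda>n. cc n * x^n) sums Cf x" unfolding Cf_def using summ_cc[OF assms] by (simp add: summable_sums)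
  ultimately have "Cf x = x * (Gd x - 4 * (x * Gd x) - 2 * Gf x) + 1" by (simp add: sums_iff cc_def)
  thus ?thesis by (simp add: algebra_simps)
qed

lemma F_G: assumes "\<bar>x\<bar> < 1/4" shows "x * Fd x = Gf x"
proof -
  have s1: "(\<lambda>n. diffs aa n * x^n) sums Fd x" unfolding Fd_def by (rule deriv_ps(2)[OF summ_aa assms])
  have "diffs aa = (\<lambda>n. bb (Suc n))" by (rule ext) (simp add: diffs_def aa_def del: of_nat_Suc)
  hence "(\<lambda>n. bb (Suc n) * x^n) sums Fd x" using s1 by simp
  hence "(\<lambda>n. bb n * x^n) sums (x * Fd x + bb 0)" by (rule shift_1)
  moreover have "(\<lambda>n. bb n * x^n) sums Gf x" unfolding Gf_def using summ_bb[OF assms] by (simp add: summable_sums)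
  ultimately show ?thesis by (simp add: sums_iff bb_def harm_def)
qed

lemma L_ln: fixes t :: real assumes "\<bar>t\<bar> < 1" shows "t * Ld t = - ln (1 - t)"
proof -
  have s1: "(\<lambda>n. diffs li n * t^n) sums Ld t" unfolding Ld_def
    by (rule deriv_ps(2)[where K=1]) (use assms summ_li in auto)
  have "diffs li = (\<lambda>n. (\<lambda>k. 1 / real k) (Suc n))" by (rule ext) (simp add: diffs_def li_def power2_eq_square del: of_nat_Suc)
  hence "(\<lambda>n. (\<lambda>k. 1 / real k) (Suc n) * t^n) sums Ld t" using s1 by simp
  hence "(\<lambda>n. 1 / real n * t^n) sums (t * Ld t + 1 / real 0)" by (rule shift_1)
  hence a: "(\<lambda>n. 1 / real n * t^n) sums (t * Ld t)" by simp
  have "(\<lambda>n. - ((-(-t))^n) / of_nat n) sums ln (1 + (-t))" by (rule ln_series') (use assms in auto)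
  hence "(\<lambda>n. - (1 / real n * t^n)) sums ln (1 - t)" by simp
  hence "(\<lambda>n. 1 / real n * t^n) sums (- ln (1 - t))" using sums_minus by fastforce
  with a show ?thesis by (simp add: sums_iff)
qed

lemma const_on:
  fixes f f' :: "real \<Rightarrow> real"
  assumes d: "\<And>t. 0 \<le> t \<Longrightarrow> t \<le> b \<Longrightarrow> (f has_real_derivative f' t) (at t)"
    and z: "\<And>t. 0 < t \<Longrightarrow> t < b \<Longrightarrow> f' t = 0" and y: "0 \<le> y" "y \<le> b"
  shows "f y = f 0"
proof (cases "y = 0")
  case True thus ?thesis by simp
next
  case False
  hence "0 < y" using y by simp
  show ?thesis
  proof (rule DERIV_isconst_end[OF \<open>0 < y\<close>])
    show "continuous_on {0..y} f"
      by (rule continuous_at_imp_continuous_on) (use y in \<open>auto intro!: DERIV_isCont d\<close>)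
    fix t assume "0 < t" "t < y"
    thus "(f has_real_derivative 0) (at t)" using d[of t] z[of t] y by auto
  qed
qed

lemma x_bound: fixes y :: real assumes "0 \<le> y" "y \<le> 1/3" shows "\<bar>y * (1 - y)\<bar> < 1/4" "0 \<le> y * (1-y)"
proof -
  have "0 \<le> (1/3 - y) * (2/3 - y)" using assms by (intro mult_nonneg_nonneg) auto
  moreover have "0 \<le> y * (1-y)" using assms by (intro mult_nonneg_nonneg) auto
  moreover have "(1/3 - y) * (2/3 - y) = 2/9 - y * (1-y)" by (simp add: algebra_simps field_simps)
  ultimately show "\<bar>y * (1 - y)\<bar> < 1/4" "0 \<le> y * (1-y)" by auto
qed

lemma dC: "\<bar>x\<bar> < 1/4 \<Longrightarrow> (Cf has_real_derivative Cd x) (at x)"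
  unfolding Cf_def[abs_def] Cd_def by (rule deriv_ps(1)[OF summ_cc])
lemma dG: "\<bar>x\<bar> < 1/4 \<Longrightarrow> (Gf has_real_derivative Gd x) (at x)"
  unfolding Gf_def[abs_def] Gd_def by (rule deriv_ps(1)[OF summ_bb])
lemma dF: "\<bar>x\<bar> < 1/4 \<Longrightarrow> (Ff has_real_derivative Fd x) (at x)"
  unfolding Ff_def[abs_def] Fd_def by (rule deriv_ps(1)[OF summ_aa])
lemma dL: "\<bar>x\<bar> < 1 \<Longrightarrow> (Li2 has_real_derivative Ld x) (at x)"
  unfolding Li2_def[abs_def] Ld_def by (rule deriv_ps(1)[where K=1]) (use summ_li in auto)

lemma dx: "((\<lambda>y. y * (1 - y)) has_real_derivative (1 - 2*y)) (at y)"
  by (auto intro!: derivative_eq_intros simp: algebra_simps)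

lemma C_y: assumes "0 \<le> y" "y \<le> 1/3" shows "Cf (y * (1-y)) * (1 - 2*y) = 1"
proof -
  have "(\<lambda>t. Cf (t * (1-t)) * (1 - 2*t)) y = (\<lambda>t. Cf (t * (1-t)) * (1 - 2*t)) 0"
  proof (rule const_on[where b="1/3"])
    fix t :: real assume t: "0 \<le> t" "t \<le> 1/3"
    have "((\<lambda>t. Cf (t * (1-t))) has_real_derivative Cd (t*(1-t)) * (1 - 2*t)) (at t)"
      by (rule DERIV_chain2[OF dC dx]) (rule x_bound[OF t])
    hence "((\<lambda>t. Cf (t * (1-t)) * (1 - 2*t)) has_real_derivative
       Cd (t*(1-t)) * (1 - 2*t) * (1 - 2*t) + Cf (t*(1-t)) * (0 - 2*1)) (at t)"
      by (intro DERIV_mult derivative_eq_intros) auto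
    moreover have "Cd (t*(1-t)) * (1 - 2*t) * (1 - 2*t) + Cf (t*(1-t)) * (0 - 2*1) = 0"
      using C_ode[OF x_bound(1)[OF t]] by (simp add: algebra_simps power2_eq_square)
    ultimately show "((\<lambda>t. Cf (t * (1-t)) * (1 - 2*t)) has_real_derivative (\<lambda>_. 0) t) (at t)" by simp
  qed (use assms in auto)
  thus ?thesis by (simp add: Cf_def cc_def)
qed

lemma dln1: "t < 1 \<Longrightarrow> ((\<lambda>t. ln (1 - t)) has_real_derivative (-1/(1-t))) (at t)"
  for t :: real by (auto intro!: derivative_eq_intros simp: field_simps)
lemma dln2: "t < 1/2 \<Longrightarrow> ((\<lambda>t. ln (1 - 2*t)) has_real_derivative (-2/(1-2*t))) (at t)"
  for t :: real by (auto intro!: derivative_eq_intros simp: field_simps)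
lemma du: "t < 1 \<Longrightarrow> ((\<lambda>t. t / (1 - t)) has_real_derivative (1/(1-t)^2)) (at t)"
  for t :: real by (auto intro!: derivative_eq_intros simp: field_simps power2_eq_square)

lemma G_y: assumes "0 \<le> y" "y \<le> 1/3"
  shows "Gf (y * (1-y)) * (1 - 2*y) - 2 * (ln (1-y) - ln (1 - 2*y)) = 0"
proof -
  have "(\<lambda>t. Gf (t * (1-t)) * (1 - 2*t) - 2 * (ln (1-t) - ln (1 - 2*t))) y =
        (\<lambda>t. Gf (t * (1-t)) * (1 - 2*t) - 2 * (ln (1-t) - ln (1 - 2*t))) 0"
  proof (rule const_on[where b="1/3"])
    fix t :: real assume t: "0 \<le> t" "t \<le> 1/3"
    have g: "((\<lambda>t. Gf (t * (1-t))) has_real_derivative Gd (t*(1-t)) * (1 - 2*t)) (at t)"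
      by (rule DERIV_chain2[OF dG dx]) (rule x_bound[OF t])
    have "((\<lambda>t. Gf (t * (1-t)) * (1 - 2*t) - 2 * (ln (1-t) - ln (1 - 2*t))) has_real_derivative
       Gd (t*(1-t)) * (1 - 2*t) * (1 - 2*t) + Gf (t*(1-t)) * (0 - 2*1) - 2 * (-1/(1-t) - (-2/(1-2*t)))) (at t)"
    proof -
      have d2: "((\<lambda>t. 1 - 2*t) has_real_derivative (0 - 2*1)) (at t)"
        by (auto intro!: derivative_eq_intros)
      have l1: "((\<lambda>t. ln (1 - t)) has_real_derivative (-1/(1-t))) (at t)" using t by (intro dln1) auto
      have l2: "((\<lambda>t. ln (1 - 2*t)) has_real_derivative (-2/(1-2*t))) (at t)" using t by (intro dln2) auto
      note D = DERIV_diff[OF DERIV_mult'[OF g d2] DERIV_cmult[OF DERIV_diff[OF l1 l2]], of 2]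
      show ?thesis by (rule DERIV_cong[OF D]) (simp add: algebra_simps)
    qed
    thus "((\<lambda>t. Gf (t * (1-t)) * (1 - 2*t) - 2 * (ln (1-t) - ln (1 - 2*t))) has_real_derivative
       (\<lambda>t. Gd (t*(1-t)) * (1 - 2*t) * (1 - 2*t) + Gf (t*(1-t)) * (0 - 2*1) - 2 * (-1/(1-t) - (-2/(1-2*t)))) t) (at t)"
      by simp
  next
    fix t :: real assume t: "0 < t" "t < 1/3"
    define x where "x = t * (1 - t)"
    have xb: "\<bar>x\<bar> < 1/4" "x > 0" using x_bound[of t] t by (auto simp: x_def intro!: mult_pos_pos)
    have cf: "Cf x = 1/(1-2*t)" using C_y[of t] t by (auto simp: x_def field_simps)
    define A where "A = Gd x * (1 - 2*t) * (1 - 2*t) - 2 * Gf x"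
    have "x * A = Cf x - 1" using G_ode[OF xb(1)] unfolding A_def x_def
      by (simp add: algebra_simps power2_eq_square)
    also have "\<dots> = 2 * t / (1 - 2*t)" using t by (simp add: cf field_simps)
    finally have "t * (1-t) * A = 2 * t / (1 - 2*t)" by (simp add: x_def)
    moreover have nz: "t \<noteq> 0" "1 - t \<noteq> 0" "1 - 2*t \<noteq> 0" using t by auto
    ultimately have "t * (1-t) * A * (1 - 2*t) = 2 * t" by (simp add: divide_simps)
    hence "t * (A * ((1 - 2*t) * (1 - t))) = t * 2" by (simp add: mult_ac)
    hence "A * ((1 - 2*t) * (1 - t)) = 2" using nz(1) by simp
    hence "A = 2 / ((1 - 2*t) * (1 - t))" using nz by (simp add: eq_divide_eq)
    thus "Gd (t*(1-t)) * (1 - 2*t) * (1 - 2*t) + Gf (t*(1-t)) * (0 - 2*1) - 2 * (-1/(1-t) - (-2/(1-2*t))) = 0"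
      using t unfolding A_def x_def by (simp add: field_simps)
  qed (use assms in auto)
  thus ?thesis by (simp add: Gf_def bb_def harm_def)
qed

lemma F_y: assumes "0 \<le> y" "y \<le> 1/3"
  shows "Ff (y * (1-y)) - 2 * Li2 (y / (1 - y)) = 0"
proof -
  have "(\<lambda>t. Ff (t * (1-t)) - 2 * Li2 (t / (1 - t))) y = (\<lambda>t. Ff (t * (1-t)) - 2 * Li2 (t / (1 - t))) 0"
  proof (rule const_on[where b="1/3"])
    fix t :: real assume t: "0 \<le> t" "t \<le> 1/3"
    have f: "((\<lambda>t. Ff (t * (1-t))) has_real_derivative Fd (t*(1-t)) * (1 - 2*t)) (at t)"
      by (rule DERIV_chain2[OF dF dx]) (rule x_bound[OF t])
    have "\<bar>t / (1 - t)\<bar> < 1" using t by (auto simp: field_simps)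
    hence l: "((\<lambda>t. Li2 (t / (1 - t))) has_real_derivative Ld (t / (1 - t)) * (1/(1-t)^2)) (at t)"
      using t by (intro DERIV_chain2[OF dL du]) auto
    have "((\<lambda>t. Ff (t * (1-t)) - 2 * Li2 (t / (1 - t))) has_real_derivative
        Fd (t*(1-t)) * (1 - 2*t) - 2 * (Ld (t / (1 - t)) * (1/(1-t)^2))) (at t)"
      by (intro DERIV_diff DERIV_cmult f l)
    thus "((\<lambda>t. Ff (t * (1-t)) - 2 * Li2 (t / (1 - t))) has_real_derivative
        (\<lambda>t. Fd (t*(1-t)) * (1 - 2*t) - 2 * (Ld (t / (1 - t)) * (1/(1-t)^2))) t) (at t)" by simp
  next
    fix t :: real assume t: "0 < t" "t < 1/3"
    define x where "x = t * (1 - t)"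
    define L where "L = ln (1-t) - ln (1 - 2*t)"
    define u where "u = t / (1 - t)"
    have xb: "\<bar>x\<bar> < 1/4" "x > 0" using x_bound[of t] t by (auto simp: x_def intro!: mult_pos_pos)
    have gf: "Gf x * (1 - 2*t) = 2 * L" using G_y[of t] t by (simp add: x_def L_def)
    have "x * Fd x = Gf x" by (rule F_G[OF xb(1)])
    hence "Fd x = Gf x / x" using xb by (simp add: field_simps)
    hence "Fd x * (1 - 2*t) = (Gf x * (1 - 2*t)) / x" by simp
    hence e1: "Fd x * (1 - 2*t) = 2 * L / (t * (1-t))" using gf by (simp add: x_def)
    have ub: "\<bar>u\<bar> < 1" using t by (auto simp: u_def field_simps)
    have "1 - u = (1 - 2*t) / (1 - t)" using t by (simp add: u_def field_simps)
    hence "ln (1 - u) = ln (1 - 2*t) - ln (1 - t)" using t by (simp add: ln_div)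
    hence "u * Ld u = L" using L_ln[OF ub] by (simp add: L_def)
    hence e2: "Ld u = L * (1 - t) / t" using t by (simp add: u_def field_simps)
    have "Fd (t*(1-t)) * (1 - 2*t) - 2 * (Ld (t / (1 - t)) * (1/(1-t)^2))
       = 2 * L / (t * (1-t)) - 2 * ((L * (1 - t) / t) * (1/(1-t)^2))"
      using e1 e2 by (simp only: x_def u_def)
    also have "\<dots> = 0"
    proof -
      have nz: "t \<noteq> 0" "1 - t \<noteq> 0" using t by auto
      have "(L * (1 - t) / t) * (1/(1-t)^2) = L / (t * (1 - t))" using nz by (simp add: power2_eq_square)
      thus ?thesis by simp
    qed
    finally show "Fd (t*(1-t)) * (1 - 2*t) - 2 * (Ld (t / (1 - t)) * (1/(1-t)^2)) = 0" .
  qed (use assms in auto)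
  moreover have "Ff 0 = 0" "Li2 0 = 0" by (simp_all add: Ff_def Li2_def) (simp_all add: aa_def li_def)
  ultimately show ?thesis by simp
qed

lemma F_val: "Ff (2/9) = 2 * Li2 (1/2)"
  using F_y[of "1/3"] by simp

lemma li_bound: "\<bar>x\<bar> \<le> 1 \<Longrightarrow> norm (li n * x^n) \<le> li n"
proof -
  assume "\<bar>x\<bar> \<le> 1"
  hence "\<bar>x\<bar>^n \<le> 1" by (simp add: power_le_one)
  thus "norm (li n * x^n) \<le> li n" unfolding li_def
    by (simp add: abs_mult power_abs divide_inverse mult_left_le)
qed

lemma li_sums: "li sums (pi^2/6)"
proof -
  have "(\<lambda>n. li (Suc n)) sums (pi^2/6)" using inverse_squares_sums
    by (simp add: li_def add.commute)
  hence "li sums (pi^2/6 + li 0)" by (subst sums_Suc_iff[symmetric])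
  thus ?thesis by (simp add: li_def)
qed

lemma Li2_cont: "continuous_on {-1..1} Li2"
  unfolding Li2_def[abs_def]
proof (rule uniform_limit_theorem[OF _ Weierstrass_m_test[where M=li]])
  show "\<forall>\<^sub>F n in sequentially. continuous_on {-1..1} (\<lambda>x. \<Sum>i<n. li i * x ^ i)"
    by (intro always_eventually allI continuous_intros)
  show "summable li" using li_sums by (simp add: sums_iff)
  fix n and x :: real assume "x \<in> {-1..1}"
  thus "norm (li n * x^n) \<le> li n" by (intro li_bound) auto
qed simp

lemma Li2_1: "Li2 1 = pi^2/6"
  using li_sums by (simp add: Li2_def sums_iff)

lemma refl_const: assumes "0 < a" "a \<le> 1/2"
  shows "Li2 a + Li2 (1-a) + ln a * ln (1-a) = Li2 (1/2) + Li2 (1 - 1/2) + ln (1/2) * ln (1 - 1/2)"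
proof (cases "a = 1/2")
  case True thus ?thesis by (simp only: True)
next
  case False
  hence a: "a < 1/2" using assms by simp
  have d: "((\<lambda>t. Li2 t + Li2 (1-t) + ln t * ln (1-t)) has_real_derivative 0) (at t)" if t: "0 < t" "t < 1" for t :: real
  proof -
    have l1: "(Li2 has_real_derivative Ld t) (at t)" using t by (intro dL) auto
    have l2: "((\<lambda>t. Li2 (1-t)) has_real_derivative Ld (1-t) * (0 - 1)) (at t)"
      using t by (intro DERIV_chain2[OF dL] derivative_eq_intros) auto
    have l3: "(ln has_real_derivative 1/t) (at t)" using t by (auto intro!: derivative_eq_intros)
    have l4: "((\<lambda>t. ln (1-t)) has_real_derivative (-1/(1-t))) (at t)" using t by (intro dln1) auto
    note D = DERIV_add[OF DERIV_add[OF l1 l2] DERIV_mult'[OF l3 l4]]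
    have e1: "t * Ld t = - ln (1-t)" using t by (intro L_ln) auto
    have e2: "(1-t) * Ld (1-t) = - ln t" using L_ln[of "1-t"] t by auto
    have "Ld t + Ld (1-t) * (0-1) + (ln t * (-1/(1-t)) + 1/t * ln (1-t)) = 0"
    proof -
      have "Ld t = - ln (1-t) / t" using e1 t by (simp add: field_simps)
      moreover have "Ld (1-t) = - ln t / (1-t)" using e2 t by (simp add: field_simps)
      ultimately show ?thesis by simp
    qed
    thus ?thesis by (intro DERIV_cong[OF D]) simp
  qed
  have "(\<lambda>t. Li2 t + Li2 (1-t) + ln t * ln (1-t)) (1/2) = (\<lambda>t. Li2 t + Li2 (1-t) + ln t * ln (1-t)) a"
  proof (rule DERIV_isconst_end[OF a])
    show "continuous_on {a..1/2} (\<lambda>t. Li2 t + Li2 (1-t) + ln t * ln (1-t))"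
      by (rule continuous_at_imp_continuous_on) (use assms in \<open>auto intro!: DERIV_isCont[OF d]\<close>)
    fix t assume "a < t" "t < 1/2"
    thus "((\<lambda>t. Li2 t + Li2 (1-t) + ln t * ln (1-t)) has_real_derivative 0) (at t)" using assms by (intro d) auto
  qed
  thus ?thesis by simp
qed

lemma Li2_half: "2 * Li2 (1/2) = pi^2/6 - (ln 2)^2"
proof -
  define K where "K = Li2 (1/2) + Li2 (1 - 1/2) + ln (1/2) * ln (1 - 1/2)"
  let ?R = "\<lambda>t. Li2 t + Li2 (1-t) + ln t * ln (1-t)"
  have "\<forall>y>0. y < 1/2 \<longrightarrow> ?R y = K" unfolding K_def using refl_const less_imp_le by blast
  hence ev: "eventually (\<lambda>t. ?R t = K) (at_right 0)"
    unfolding eventually_at_right_field by (intro exI[of _ "1/2"]) auto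
  have L0: "Li2 0 = 0" by (simp add: Li2_def) (simp add: li_def)
  have c: "continuous_on {0..1} (\<lambda>t. Li2 t + Li2 (1-t))"
    by (intro continuous_intros continuous_on_compose2[OF Li2_cont]) auto
  hence "((\<lambda>t. Li2 t + Li2 (1-t)) \<longlongrightarrow> Li2 0 + Li2 (1-0)) (at 0 within {0..1})"
    unfolding continuous_on_def by force
  hence t1: "((\<lambda>t. Li2 t + Li2 (1-t)) \<longlongrightarrow> Li2 1) (at_right 0)"
    by (simp add: at_within_Icc_at_right L0)
  have t2: "((\<lambda>t::real. ln t * ln (1-t)) \<longlongrightarrow> 0) (at_right 0)" by real_asymp
  have "(?R \<longlongrightarrow> Li2 1 + 0) (at_right 0)" using tendsto_add[OF t1 t2] by (simp add: add.assoc)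
  moreover have "(?R \<longlongrightarrow> K) (at_right 0)" using ev by (rule tendsto_eventually)
  ultimately have "K = Li2 1" by (intro tendsto_unique[of "at_right (0::real)"]) auto
  hence "2 * Li2 (1/2) + (ln (1/2))^2 = pi^2/6" by (simp add: K_def Li2_1 power2_eq_square)
  moreover have "ln (1/2::real) = - ln 2" by (simp add: ln_div)
  ultimately show ?thesis by simp
qed

theorem mainTheorem9:
  shows "(\<lambda>m. let n = Suc m in
            2 ^ n * harm n * real (2 * n choose n) / (real n * 3 ^ (2 * n)))
         sums (pi ^ 2 / 6 - (ln 2) ^ 2)"
proof -
  have "(\<lambda>n. aa n * (2/9)^n) sums Ff (2/9)" unfolding Ff_def
    by (rule summable_sums) (rule summ_aa, simp)
  hence s: "(\<lambda>n. aa n * (2/9)^n) sums (pi^2/6 - (ln 2)^2)" using F_val Li2_half by simp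
  have "(\<lambda>m. aa (Suc m) * (2/9)^(Suc m)) sums (pi^2/6 - (ln 2)^2)"
    by (subst sums_Suc_iff) (use s in \<open>simp add: aa_def\<close>)
  moreover have "(\<lambda>m. aa (Suc m) * (2/9)^(Suc m)) = (\<lambda>m. let n = Suc m in
            2 ^ n * harm n * real (2 * n choose n) / (real n * 3 ^ (2 * n)))"
  proof (rule ext)
    fix m :: nat
    have "(3::real) ^ (2 * Suc m) = 9 ^ Suc m" by (simp add: power_mult)
    thus "aa (Suc m) * (2/9)^(Suc m) = (let n = Suc m in
            2 ^ n * harm n * real (2 * n choose n) / (real n * 3 ^ (2 * n)))"
      unfolding Let_def aa_def bb_def cc_def by (simp add: power_divide del: of_nat_Suc power_Suc)
  qed
  ultimately show ?thesis by simp
qed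

end
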